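(* Let $\mathcal{G}=(G,<,+,0,\ldots)$ be an o-minimal expansion of an ordered abelian group, let $M\subseteq G^m$ be a definable set that is not bounded and let $N\subseteq G^n$ be a bounded definable set. If there is a definable bijection between $M$ and $N$, then there exist a bounded definable set $D\subseteq G$ and a definable bijection $(0,+\infty)\to D$.
   Context: A definable set $M\subseteq G^n$ is bounded if $M\subseteq[b,b']^n$ for some $b,b'\in G$, where $[b,b']=\{t\in G\mid b\le t\le b'\}$; here $(0,+\infty)=\{t\in G\mid t>0\}$. *)

theory Defs
  imports Main
begin

text \<open>Points of G^n are lists of length n.  A first-order structure on G (with parameters)
is given, following van den Dries, by the collections S n of definable subsets of G^n.\<close>

definition cube :: "nat \<Rightarrow> 'a list set" where
  "cube n = {xs. length xs = n}"

definition is_open_interval :: "('a::linorder) set \<Rightarrow> bool" where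
  "is_open_interval I \<longleftrightarrow>
     (\<exists>a b. I = {a<..<b}) \<or> (\<exists>b. I = {..<b}) \<or> (\<exists>a. I = {a<..}) \<or> I = UNIV"

definition structure_on :: "(nat \<Rightarrow> 'a list set set) \<Rightarrow> bool" where
  "structure_on S \<longleftrightarrow>
     (\<forall>n. \<forall>A\<in>S n. A \<subseteq> cube n) \<and>
     (\<forall>n. {} \<in> S n) \<and>
     (\<forall>n. \<forall>A\<in>S n. \<forall>B\<in>S n. A \<union> B \<in> S n) \<and>
     (\<forall>n. \<forall>A\<in>S n. cube n - A \<in> S n) \<and>
     (\<forall>n. \<forall>A\<in>S n. {xs @ [x] | xs x. xs \<in> A} \<in> S (Suc n)) \<and>
     (\<forall>n. \<forall>A\<in>S n. {x # xs | x xs. xs \<in> A} \<in> S (Suc n)) \<and>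
     (\<forall>n i j. i < n \<longrightarrow> j < n \<longrightarrow> {xs \<in> cube n. xs ! i = xs ! j} \<in> S n) \<and>
     (\<forall>n. \<forall>A\<in>S (Suc n). butlast ` A \<in> S n) \<and>
     (\<forall>a. {[a]} \<in> S 1)"

definition o_minimal_expansion :: "(nat \<Rightarrow> ('a::linordered_ab_group_add) list set set) \<Rightarrow> bool" where
  "o_minimal_expansion S \<longleftrightarrow>
     structure_on S \<and>
     {[x, y] | x y. x < y} \<in> S 2 \<and>
     {[x, y, z] | x y z. x + y = z} \<in> S 3 \<and>
     (\<forall>A\<in>S 1. \<exists>P F. finite P \<and> finite F \<and> (\<forall>I\<in>F. is_open_interval I) \<and>
                      {x. [x] \<in> A} = P \<union> \<Union>F)"

definition definable :: "(nat \<Rightarrow> 'a list set set) \<Rightarrow> nat \<Rightarrow> 'a list set \<Rightarrow> bool" where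
  "definable S n A \<longleftrightarrow> A \<in> S n"

definition definable_map ::
  "(nat \<Rightarrow> 'a list set set) \<Rightarrow> nat \<Rightarrow> nat \<Rightarrow> 'a list set \<Rightarrow> ('a list \<Rightarrow> 'a list) \<Rightarrow> bool" where
  "definable_map S m n M f \<longleftrightarrow>
     M \<subseteq> cube m \<and> f ` M \<subseteq> cube n \<and> {xs @ f xs | xs. xs \<in> M} \<in> S (m + n)"

definition bounded_set :: "('a::linorder) list set \<Rightarrow> bool" where
  "bounded_set M \<longleftrightarrow> (\<exists>b b'. \<forall>xs\<in>M. \<forall>t\<in>set xs. b \<le> t \<and> t \<le> b')"

end

theory Submission
  imports Defs
begin

lemma so_all1: assumes "structure_on S" shows "(\<forall>n. \<forall>A\<in>S n. A \<subseteq> cube n)"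
  using assms unfolding structure_on_def by (elim conjE) assumption
lemma so_all2: assumes "structure_on S" shows "(\<forall>n. {} \<in> S n)"
  using assms unfolding structure_on_def by (elim conjE) assumption
lemma so_all3: assumes "structure_on S" shows "(\<forall>n. \<forall>A\<in>S n. \<forall>B\<in>S n. A \<union> B \<in> S n)"
  using assms unfolding structure_on_def by (elim conjE) assumption
lemma so_all4: assumes "structure_on S" shows "(\<forall>n. \<forall>A\<in>S n. cube n - A \<in> S n)"
  using assms unfolding structure_on_def by (elim conjE) assumption
lemma so_all5: assumes "structure_on S" shows "(\<forall>n. \<forall>A\<in>S n. {x # xs | x xs. xs \<in> A} \<in> S (Suc n))"
  using assms unfolding structure_on_def by (elim conjE) assumption
lemma so_all6: assumes "structure_on S" shows "(\<forall>n i j. i < n \<longrightarrow> j < n \<longrightarrow> {xs \<in> cube n. xs ! i = xs ! j} \<in> S n)"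
  using assms unfolding structure_on_def by (elim conjE) assumption
lemma so_all7: assumes "structure_on S" shows "(\<forall>n. \<forall>A\<in>S (Suc n). butlast ` A \<in> S n)"
  using assms unfolding structure_on_def by (elim conjE) assumption
lemma so_all8: assumes "structure_on S" shows "(\<forall>a. {[a]} \<in> S 1)"
  using assms unfolding structure_on_def by (elim conjE) assumption
lemma so_sub: "structure_on S \<Longrightarrow> A \<in> S n \<Longrightarrow> A \<subseteq> cube n"
  by (rule so_all1[rule_format])
lemma so_empty: "structure_on S \<Longrightarrow> {} \<in> S n"
  by (rule so_all2[rule_format])
lemma so_un: "structure_on S \<Longrightarrow> A \<in> S n \<Longrightarrow> B \<in> S n \<Longrightarrow> A \<union> B \<in> S n"
  by (rule so_all3[rule_format])
lemma so_compl: "structure_on S \<Longrightarrow> A \<in> S n \<Longrightarrow> cube n - A \<in> S n"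
  by (rule so_all4[rule_format])
lemma so_cons: "structure_on S \<Longrightarrow> A \<in> S n \<Longrightarrow> {x # xs | x xs. xs \<in> A} \<in> S (Suc n)"
  by (rule so_all5[rule_format])
lemma so_diag: "structure_on S \<Longrightarrow> i < n \<Longrightarrow> j < n \<Longrightarrow> {xs \<in> cube n. xs ! i = xs ! j} \<in> S n"
  by (rule so_all6[rule_format])
lemma so_butlast: "structure_on S \<Longrightarrow> A \<in> S (Suc n) \<Longrightarrow> butlast ` A \<in> S n"
  by (rule so_all7[rule_format])
lemma so_single: "structure_on S \<Longrightarrow> {[a]} \<in> S 1"
  by (rule so_all8[rule_format])

lemma so_cube: "structure_on S \<Longrightarrow> cube n \<in> S n"
proof -
  assume s: "structure_on S"
  have "cube n - {} \<in> S n" by (rule so_compl[OF s so_empty[OF s]])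
  then show ?thesis by simp
qed

lemma so_int: "structure_on S \<Longrightarrow> A \<in> S n \<Longrightarrow> B \<in> S n \<Longrightarrow> A \<inter> B \<in> S n"
proof -
  assume s: "structure_on S" and a: "A \<in> S n" and b: "B \<in> S n"
  have "A \<inter> B = cube n - ((cube n - A) \<union> (cube n - B))"
    using so_sub[OF s a] so_sub[OF s b] by blast
  then show ?thesis using s a b by (metis so_compl so_un)
qed

lemma so_pre: "structure_on S \<Longrightarrow> A \<in> S k \<Longrightarrow> {xs @ ys | xs ys. length xs = n \<and> ys \<in> A} \<in> S (n + k)"
proof (induction n)
  case 0
  then show ?case by simp
next
  case (Suc n)
  have "{x # zs | x zs. zs \<in> {xs @ ys | xs ys. length xs = n \<and> ys \<in> A}} = {xs @ ys | xs ys. length xs = Suc n \<and> ys \<in> A}"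
    apply (auto simp: length_Suc_conv)
    apply (metis append_Cons)
    by blast
  then show ?case using so_cons[OF Suc(2) Suc.IH[OF Suc(2,3)]] by simp
qed

lemma so_diags: "structure_on S \<Longrightarrow> C \<in> S N \<Longrightarrow> \<forall>q\<in>set ps. fst q < N \<and> snd q < N \<Longrightarrow> {zs \<in> C. \<forall>q\<in>set ps. zs ! fst q = zs ! snd q} \<in> S N"
proof (induction ps)
  case Nil
  then show ?case by simp
next
  case (Cons p ps)
  have ij: "fst p < N" "snd p < N" using Cons(4) by auto
  have ih: "{zs \<in> C. \<forall>q\<in>set ps. zs ! fst q = zs ! snd q} \<in> S N" using Cons by simp
  have sub: "C \<subseteq> cube N" using so_sub[OF Cons(2,3)] .
  have "{zs \<in> C. \<forall>q\<in>set (p#ps). zs ! fst q = zs ! snd q} = {zs \<in> C. \<forall>q\<in>set ps. zs ! fst q = zs ! snd q} \<inter> {xs \<in> cube N. xs ! fst p = xs ! snd p}"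
    using sub by auto
  moreover have "{xs \<in> cube N. xs ! fst p = xs ! snd p} \<in> S N" using so_diag[OF Cons(2) ij] .
  ultimately show ?case using so_int[OF Cons(2) ih] by simp
qed

lemma so_take: "structure_on S \<Longrightarrow> B \<in> S (n + k) \<Longrightarrow> take n ` B \<in> S n"
proof (induction k arbitrary: B)
  case 0
  have "\<forall>zs\<in>B. length zs = n" using so_sub[OF 0(1)] 0(2) by (auto simp: cube_def)
  then have "take n ` B = B" by (simp add: image_iff)
  then show ?case using 0 by simp
next
  case (Suc k)
  have "butlast ` B \<in> S (n + k)" using so_butlast[OF Suc(2)] Suc(3) by simp
  then have "take n ` butlast ` B \<in> S n" using Suc.IH[OF Suc(2)] by blast
  moreover have "take n ` butlast ` B = take n ` B"
  proof -
    have "take n (butlast zs) = take n zs" if "zs \<in> B" for zs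
    proof -
      have "length zs = Suc (n + k)" using so_sub[OF Suc(2,3)] that by (auto simp: cube_def)
      then show ?thesis by (simp add: butlast_conv_take min_def)
    qed
    then show ?thesis by (simp add: image_image)
  qed
  ultimately show ?case by simp
qed

lemma so_pull: assumes s: "structure_on S" and a: "A \<in> S k" and l: "length ix = k"
  and i: "\<forall>i\<in>set ix. i < n"
  shows "{xs \<in> cube n. map (nth xs) ix \<in> A} \<in> S n"
proof -
  define C0 where "C0 = {xs @ ys | xs ys. length xs = n \<and> ys \<in> A}"
  have c0: "C0 \<in> S (n + k)" unfolding C0_def by (rule so_pre[OF s a])
  define ps where "ps = map (\<lambda>j. (n + j, ix ! j)) [0..<k]"
  define C1 where "C1 = {zs \<in> C0. \<forall>q\<in>set ps. zs ! fst q = zs ! snd q}"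
  have "\<forall>q\<in>set ps. fst q < n + k \<and> snd q < n + k" using i l nth_mem by (fastforce simp: ps_def)
  then have c1: "C1 \<in> S (n + k)" unfolding C1_def by (rule so_diags[OF s c0])
  have "take n ` C1 = {xs \<in> cube n. map (nth xs) ix \<in> A}"
  proof
    show "take n ` C1 \<subseteq> {xs \<in> cube n. map (nth xs) ix \<in> A}"
    proof
      fix z assume "z \<in> take n ` C1"
      then obtain xs ys where z: "z = xs" and xs: "length xs = n" and ys: "ys \<in> A"
        and d: "\<forall>q\<in>set ps. (xs @ ys) ! fst q = (xs @ ys) ! snd q"
        unfolding C1_def C0_def by auto
      have ly: "length ys = k" using so_sub[OF s a] ys by (auto simp: cube_def)
      have "ys ! j = xs ! (ix ! j)" if "j < k" for j
      proof -
        have "(n + j, ix ! j) \<in> set ps" using that by (auto simp: ps_def)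
        then have "(xs @ ys) ! (n + j) = (xs @ ys) ! (ix ! j)" using d by auto
        moreover have "ix ! j < n" using i l that by auto
        ultimately show ?thesis using xs by (simp add: nth_append)
      qed
      then have "map (nth xs) ix = ys" using ly l by (intro nth_equalityI) auto
      then show "z \<in> {xs \<in> cube n. map (nth xs) ix \<in> A}" using z xs ys by (simp add: cube_def)
    qed
  next
    show "{xs \<in> cube n. map (nth xs) ix \<in> A} \<subseteq> take n ` C1"
    proof
      fix xs assume xs: "xs \<in> {xs \<in> cube n. map (nth xs) ix \<in> A}"
      then have lx: "length xs = n" by (simp add: cube_def)
      let ?z = "xs @ map (nth xs) ix"
      have "?z \<in> C1" unfolding C1_def C0_def ps_def using xs lx i l
        by (auto simp: nth_append)
      moreover have "take n ?z = xs" using lx by simp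
      ultimately show "xs \<in> take n ` C1" by force
    qed
  qed
  then show ?thesis using so_take[OF s c1] by simp
qed

datatype 'a fm = FAtom "'a list set" "nat list" | FNeg "'a fm" | FConj "'a fm" "'a fm" | FEx "'a fm"

fun sat :: "'a fm \<Rightarrow> 'a list \<Rightarrow> bool" where
  "sat (FAtom A ix) xs = (map (nth xs) ix \<in> A)"
| "sat (FNeg p) xs = (\<not> sat p xs)"
| "sat (FConj p q) xs = (sat p xs \<and> sat q xs)"
| "sat (FEx p) xs = (\<exists>x. sat p (xs @ [x]))"

fun fwf :: "(nat \<Rightarrow> 'a list set set) \<Rightarrow> nat \<Rightarrow> 'a fm \<Rightarrow> bool" where
  "fwf S n (FAtom A ix) = (A \<in> S (length ix) \<and> (\<forall>i\<in>set ix. i < n))"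
| "fwf S n (FNeg p) = fwf S n p"
| "fwf S n (FConj p q) = (fwf S n p \<and> fwf S n q)"
| "fwf S n (FEx p) = fwf S (Suc n) p"

lemma sound: "structure_on S \<Longrightarrow> fwf S n p \<Longrightarrow> {xs. length xs = n \<and> sat p xs} \<in> S n"
proof (induction p arbitrary: n)
  case (FAtom A ix)
  have "{xs. length xs = n \<and> sat (FAtom A ix) xs} = {xs \<in> cube n. map (nth xs) ix \<in> A}"
    by (auto simp: cube_def)
  then show ?case using so_pull[OF FAtom(1), of A "length ix" ix n] FAtom(2) by simp
next
  case (FNeg p)
  have "{xs. length xs = n \<and> sat (FNeg p) xs} = cube n - {xs. length xs = n \<and> sat p xs}"
    by (auto simp: cube_def)
  moreover have "{xs. length xs = n \<and> sat p xs} \<in> S n" using FNeg.IH[OF FNeg(2)] FNeg(3) by simp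
  then have "cube n - {xs. length xs = n \<and> sat p xs} \<in> S n" by (rule so_compl[OF FNeg(2)])
  ultimately show ?case by simp
next
  case (FConj p q)
  have "{xs. length xs = n \<and> sat (FConj p q) xs} = {xs. length xs = n \<and> sat p xs} \<inter> {xs. length xs = n \<and> sat q xs}"
    by auto
  moreover have "{xs. length xs = n \<and> sat p xs} \<in> S n" using FConj.IH(1)[OF FConj(3)] FConj(4) by simp
  moreover have "{xs. length xs = n \<and> sat q xs} \<in> S n" using FConj.IH(2)[OF FConj(3)] FConj(4) by simp
  ultimately show ?case using so_int[OF FConj(3)] by simp
next
  case (FEx p)
  have "{xs. length xs = n \<and> sat (FEx p) xs} = butlast ` {xs. length xs = Suc n \<and> sat p xs}"
  proof
    show "{xs. length xs = n \<and> sat (FEx p) xs} \<subseteq> butlast ` {xs. length xs = Suc n \<and> sat p xs}"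
    proof
      fix xs assume "xs \<in> {xs. length xs = n \<and> sat (FEx p) xs}"
      then obtain x where "length xs = n" "sat p (xs @ [x])" by auto
      then have "xs @ [x] \<in> {xs. length xs = Suc n \<and> sat p xs}" "xs = butlast (xs @ [x])" by auto
      then show "xs \<in> butlast ` {xs. length xs = Suc n \<and> sat p xs}"
        by blast
    qed
  next
    show "butlast ` {xs. length xs = Suc n \<and> sat p xs} \<subseteq> {xs. length xs = n \<and> sat (FEx p) xs}"
    proof
      fix z assume "z \<in> butlast ` {xs. length xs = Suc n \<and> sat p xs}"
      then obtain ys where z: "z = butlast ys" and l: "length ys = Suc n" and sp: "sat p ys" by blast
      have "ys \<noteq> []" using l by auto
      then have "z @ [last ys] = ys" using z by simp
      then have "sat p (z @ [last ys])" using sp by simp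
      moreover have "length z = n" using z l by simp
      ultimately show "z \<in> {xs. length xs = n \<and> sat (FEx p) xs}" by auto
    qed
  qed
  moreover have "{xs. length xs = Suc n \<and> sat p xs} \<in> S (Suc n)" using FEx.IH[OF FEx(2)] FEx(3) by simp
  then have "butlast ` {xs. length xs = Suc n \<and> sat p xs} \<in> S n" by (rule so_butlast[OF FEx(2)])
  ultimately show ?case by simp
qed

definition FDisj where "FDisj p q = FNeg (FConj (FNeg p) (FNeg q))"
definition FImp where "FImp p q = FNeg (FConj p (FNeg q))"
definition FAll where "FAll p = FNeg (FEx (FNeg p))"
lemma sat_FDisj[simp]: "sat (FDisj p q) xs = (sat p xs \<or> sat q xs)" by (simp add: FDisj_def)
lemma sat_FImp[simp]: "sat (FImp p q) xs = (sat p xs \<longrightarrow> sat q xs)" by (simp add: FImp_def)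
lemma sat_FAll[simp]: "sat (FAll p) xs = (\<forall>x. sat p (xs @ [x]))" by (simp add: FAll_def)
lemma fwf_FDisj[simp]: "fwf S n (FDisj p q) = (fwf S n p \<and> fwf S n q)" by (simp add: FDisj_def)
lemma fwf_FImp[simp]: "fwf S n (FImp p q) = (fwf S n p \<and> fwf S n q)" by (simp add: FImp_def)
lemma fwf_FAll[simp]: "fwf S n (FAll p) = fwf S (Suc n) p" by (simp add: FAll_def)

fun FExs :: "nat \<Rightarrow> 'a fm \<Rightarrow> 'a fm" where
  "FExs 0 p = p"
| "FExs (Suc k) p = FExs k (FEx p)"

lemma sat_FExs[simp]: "sat (FExs k p) xs = (\<exists>ys. length ys = k \<and> sat p (xs @ ys))"
proof (induction k arbitrary: p xs)
  case 0
  then show ?case by simp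
next
  case (Suc k)
  show ?case
  proof
    assume "sat (FExs (Suc k) p) xs"
    then obtain ys x where "length ys = k" "sat p (xs @ ys @ [x])" using Suc by auto
    then show "\<exists>ys. length ys = Suc k \<and> sat p (xs @ ys)" by (intro exI[of _ "ys @ [x]"]) auto
  next
    assume "\<exists>ys. length ys = Suc k \<and> sat p (xs @ ys)"
    then obtain ys where l: "length ys = Suc k" and s: "sat p (xs @ ys)" by auto
    have "ys \<noteq> []" using l by auto
    then have e: "ys = butlast ys @ [last ys]" by simp
    have sp: "sat p (xs @ butlast ys @ [last ys])" using s e by metis
    have lb: "length (butlast ys) = k" using l by simp
    have "sat (FExs k (FEx p)) xs" unfolding Suc.IH
      using sp lb by (intro exI[of _ "butlast ys"]) auto
    then show "sat (FExs (Suc k) p) xs" by simp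
  qed
qed

lemma fwf_FExs[simp]: "fwf S n (FExs k p) = fwf S (n + k) p"
  by (induction k arbitrary: p n) auto

lemma nth_upt_append: "k \<le> length ys \<Longrightarrow> map (nth (xs @ ys)) [length xs..<length xs + k] = take k ys"
  by (rule nth_equalityI) (auto simp: nth_append)

definition LtS :: "'a::linorder list set" where "LtS = {[x,y] | x y. x < y}"
definition AddS :: "'a::linordered_ab_group_add list set" where "AddS = {[x,y,z] | x y z. x + y = z}"
definition EqS :: "'a list set" where "EqS = {xs \<in> cube 2. xs ! 0 = xs ! 1}"
lemma LtS_mem[simp]: "[a,b] \<in> LtS \<longleftrightarrow> a < b" by (simp add: LtS_def)
lemma AddS_mem[simp]: "[a,b,c] \<in> AddS \<longleftrightarrow> a + b = c" by (auto simp: AddS_def)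
lemma EqS_mem[simp]: "[a,b] \<in> EqS \<longleftrightarrow> a = b" by (simp add: EqS_def cube_def)

lemma om_so: "o_minimal_expansion S \<Longrightarrow> structure_on S"
  unfolding o_minimal_expansion_def by (elim conjE) assumption
lemma om_lt: "o_minimal_expansion S \<Longrightarrow> LtS \<in> S 2"
  unfolding o_minimal_expansion_def LtS_def by (elim conjE) assumption
lemma om_add: "o_minimal_expansion S \<Longrightarrow> AddS \<in> S 3"
  unfolding o_minimal_expansion_def AddS_def by (elim conjE) assumption
lemma om_eq: "o_minimal_expansion S \<Longrightarrow> EqS \<in> S 2"
  unfolding EqS_def by (rule so_diag[OF om_so]) auto
lemma om_1': "o_minimal_expansion S \<Longrightarrow> (\<forall>A\<in>S 1. \<exists>P F. finite P \<and> finite F \<and> (\<forall>I\<in>F. is_open_interval I) \<and>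
                      {x. [x] \<in> A} = P \<union> \<Union>F)"
  unfolding o_minimal_expansion_def by (elim conjE) assumption
lemma om_1: "o_minimal_expansion S \<Longrightarrow> A \<in> S 1 \<Longrightarrow> \<exists>P F. finite P \<and> finite F \<and> (\<forall>I\<in>F. is_open_interval I) \<and>
                      {x. [x] \<in> A} = P \<union> \<Union>F"
  using om_1' by blast

definition "FLt i j = FAtom LtS [i,j]"
definition "FEq i j = FAtom EqS [i,j]"
definition "FAdd i j k = FAtom AddS [i,j,k]"
definition "FC a i = FAtom {[a]} [i]"
lemma sat_FLt[simp]: "sat (FLt i j) xs = (xs ! i < xs ! j)" by (simp add: FLt_def)
lemma sat_FEq[simp]: "sat (FEq i j) xs = (xs ! i = xs ! j)" by (simp add: FEq_def)
lemma sat_FAdd[simp]: "sat (FAdd i j k) xs = (xs ! i + xs ! j = xs ! k)" by (simp add: FAdd_def)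
lemma sat_FC[simp]: "sat (FC a i) xs = (xs ! i = a)" by (simp add: FC_def)
lemma fwf_FLt[simp]: "o_minimal_expansion S \<Longrightarrow> fwf S n (FLt i j) = (i < n \<and> j < n)" using om_lt[of S] by (auto simp: FLt_def numeral_eq_Suc)
lemma fwf_FEq[simp]: "o_minimal_expansion S \<Longrightarrow> fwf S n (FEq i j) = (i < n \<and> j < n)" using om_eq[of S] by (auto simp: FEq_def numeral_eq_Suc)
lemma fwf_FAdd[simp]: "o_minimal_expansion S \<Longrightarrow> fwf S n (FAdd i j k) = (i < n \<and> j < n \<and> k < n)" using om_add[of S] by (auto simp: FAdd_def numeral_eq_Suc)
lemma fwf_FC[simp]: "o_minimal_expansion S \<Longrightarrow> fwf S n (FC a i) = (i < n)" using so_single[OF om_so, of S] by (auto simp: FC_def)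

lemma om_sound: "o_minimal_expansion S \<Longrightarrow> fwf S n p \<Longrightarrow> {xs. length xs = n \<and> sat p xs} \<in> S n"
  using sound om_so by blast

definition bp :: "'a::linorder set \<Rightarrow> 'a set \<Rightarrow> bool" where
  "bp E X \<longleftrightarrow> (\<forall>x y. x \<notin> E \<longrightarrow> y \<notin> E \<longrightarrow> x < y \<longrightarrow> (\<forall>e\<in>E. \<not>(x < e \<and> e < y)) \<longrightarrow> (x \<in> X \<longleftrightarrow> y \<in> X))"

lemma bp_un: "bp E1 X1 \<Longrightarrow> bp E2 X2 \<Longrightarrow> bp (E1 \<union> E2) (X1 \<union> X2)"
  unfolding bp_def by blast
lemma bp_pts: "bp P P"
  unfolding bp_def by blast
lemma lin_lo: "(x::'a::linorder) \<noteq> a \<Longrightarrow> y \<noteq> a \<Longrightarrow> x < y \<Longrightarrow> \<not>(x<a \<and> a<y) \<Longrightarrow> (a < x \<longleftrightarrow> a < y)"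
  by (metis not_less_iff_gr_or_eq order.strict_trans)
lemma lin_hi: "(x::'a::linorder) \<noteq> b \<Longrightarrow> y \<noteq> b \<Longrightarrow> x < y \<Longrightarrow> \<not>(x<b \<and> b<y) \<Longrightarrow> (x < b \<longleftrightarrow> y < b)"
  by (metis not_less_iff_gr_or_eq order.strict_trans)
lemma bp_iv: "is_open_interval I \<Longrightarrow> \<exists>E. finite E \<and> bp E I"
  unfolding is_open_interval_def
proof (elim disjE exE)
  fix a b assume I: "I = {a<..<b}"
  have "bp {a,b} I" unfolding bp_def I
  proof (intro allI impI)
    fix x y assume A: "x \<notin> {a,b}" "y \<notin> {a,b}" "x < y" "\<forall>e\<in>{a,b}. \<not>(x<e \<and> e<y)"
    have "x \<noteq> a" "y \<noteq> a" "x \<noteq> b" "y \<noteq> b" "\<not>(x<a \<and> a<y)" "\<not>(x<b \<and> b<y)" using A by simp_all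
    then have h1: "a < x \<longleftrightarrow> a < y" and h2: "x < b \<longleftrightarrow> y < b" using lin_lo[of x a y] lin_hi[of x b y] A(3) by simp_all
    show "x \<in> {a<..<b} \<longleftrightarrow> y \<in> {a<..<b}" using h1 h2 by (simp only: greaterThanLessThan_iff)
  qed
  then show ?thesis by (intro exI[of _ "{a,b}"]) simp
next
  fix b assume I: "I = {..<b}"
  have "bp {b} I" unfolding bp_def I
  proof (intro allI impI)
    fix x y assume A: "x \<notin> {b}" "y \<notin> {b}" "x < y" "\<forall>e\<in>{b}. \<not>(x<e \<and> e<y)"
    have "x \<noteq> b" "y \<noteq> b" "\<not>(x<b \<and> b<y)" using A by simp_all
    then have h2: "x < b \<longleftrightarrow> y < b" using lin_hi[of x b y] A(3) by simp_all
    show "x \<in> {..<b} \<longleftrightarrow> y \<in> {..<b}" using h2 by (simp only: lessThan_iff)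
  qed
  then show ?thesis by (intro exI[of _ "{b}"]) simp
next
  fix a assume I: "I = {a<..}"
  have "bp {a} I" unfolding bp_def I
  proof (intro allI impI)
    fix x y assume A: "x \<notin> {a}" "y \<notin> {a}" "x < y" "\<forall>e\<in>{a}. \<not>(x<e \<and> e<y)"
    have "x \<noteq> a" "y \<noteq> a" "\<not>(x<a \<and> a<y)" using A by simp_all
    then have h1: "a < x \<longleftrightarrow> a < y" using lin_lo[of x a y] A(3) by simp_all
    show "x \<in> {a<..} \<longleftrightarrow> y \<in> {a<..}" using h1 by (simp only: greaterThan_iff)
  qed
  then show ?thesis by (intro exI[of _ "{a}"]) simp
next
  assume I: "I = UNIV"
  have "bp {} I" unfolding bp_def I by auto
  then show ?thesis by (intro exI[of _ "{}"]) simp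
qed

lemma bp_Union: "finite F \<Longrightarrow> \<forall>I\<in>F. \<exists>E. finite E \<and> bp E I \<Longrightarrow> \<exists>E. finite E \<and> bp E (\<Union>F)"
proof (induction F rule: finite_induct)
  case empty
  have "bp {} {}" unfolding bp_def by auto
  then show ?case by (intro exI[of _ "{}"]) simp
next
  case (insert I F)
  then obtain E1 E2 where "finite E1" "bp E1 I" "finite E2" "bp E2 (\<Union>F)" by auto
  then have "finite (E1 \<union> E2)" "bp (E1 \<union> E2) (\<Union>(insert I F))" using bp_un by auto
  then show ?case by (intro exI[of _ "E1 \<union> E2"]) simp
qed

lemma om_bp: "o_minimal_expansion S \<Longrightarrow> A \<in> S 1 \<Longrightarrow> \<exists>E. finite E \<and> bp E {x. [x] \<in> A}"
proof -
  assume "o_minimal_expansion S" "A \<in> S 1"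
  from om_1[OF this] obtain P F where fP: "finite P" and fF: "finite F" and iv: "\<forall>I\<in>F. is_open_interval I"
     and eq: "{x. [x] \<in> A} = P \<union> \<Union>F"
    by (elim exE conjE)
  have "\<forall>I\<in>F. \<exists>E. finite E \<and> bp E I"
  proof
    fix I assume "I \<in> F"
    then have "is_open_interval I" using iv by simp
    then show "\<exists>E. finite E \<and> bp E I" by (rule bp_iv)
  qed
  from bp_Union[OF fF this] obtain E where fE: "finite E" and bE: "bp E (\<Union>F)" by (elim exE conjE)
  have "finite (P \<union> E)" using fP fE by simp
  moreover have "bp (P \<union> E) {x. [x] \<in> A}" unfolding eq by (rule bp_un[OF bp_pts bE])
  ultimately show ?thesis by (intro exI[of _ "P \<union> E"]) simp
qed

lemma om_bp_fm: "o_minimal_expansion S \<Longrightarrow> fwf S 1 p \<Longrightarrow> \<exists>E. finite E \<and> bp E {x. sat p [x]}"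
proof -
  assume om: "o_minimal_expansion S" and w: "fwf S 1 p"
  have "{xs. length xs = 1 \<and> sat p xs} \<in> S 1" by (rule om_sound[OF om w])
  from om_bp[OF om this] show ?thesis by simp
qed

lemma bp_sym: "bp E X \<Longrightarrow> x \<notin> E \<Longrightarrow> y \<notin> E \<Longrightarrow> (\<forall>e\<in>E. \<not>(x<e \<and> e<y) \<and> \<not>(y<e \<and> e<x)) \<Longrightarrow> (x\<in>X \<longleftrightarrow> y\<in>X)"
proof -
  assume b: "bp E X" "x \<notin> E" "y \<notin> E" "\<forall>e\<in>E. \<not>(x<e \<and> e<y) \<and> \<not>(y<e \<and> e<x)"
  consider "x < y" | "x = y" | "y < x" by (rule linorder_cases)
  then show ?thesis
  proof cases
    case 1
    then show ?thesis using b unfolding bp_def by blast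
  next
    case 2
    then show ?thesis by simp
  next
    case 3
    then show ?thesis using b unfolding bp_def by blast
  qed
qed

lemma above_not_in: "\<forall>e\<in>E. e < m \<Longrightarrow> (m::'a::linorder) \<le> x \<Longrightarrow> x \<notin> E"
proof
  assume "\<forall>e\<in>E. e < m" "m \<le> x" "x \<in> E"
  then have "x < m" by blast
  then show False using \<open>m \<le> x\<close> by simp
qed

lemma above_between: "\<forall>e\<in>E. e < m \<Longrightarrow> (m::'a::linorder) \<le> x \<Longrightarrow> m \<le> y \<Longrightarrow> \<forall>e\<in>E. \<not>(x<e \<and> e<y) \<and> \<not>(y<e \<and> e<x)"
proof
  fix e assume "\<forall>e\<in>E. e < m" "m \<le> x" "m \<le> y" "e \<in> E"
  then have "e < m" by blast
  then have "e < x" "e < y" using \<open>m \<le> x\<close> \<open>m \<le> y\<close> by (simp_all add: less_le_trans)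
  then have "\<not> x < e" "\<not> y < e" by (simp_all add: not_less less_imp_le)
  then show "\<not>(x<e \<and> e<y) \<and> \<not>(y<e \<and> e<x)" by blast
qed

lemma bp_tail:
  fixes X E :: "'a::linorder set"
  assumes fin: "finite E" and bpX: "bp E X" and nomax: "\<forall>x::'a. \<exists>y. x < y"
  shows "\<exists>e. (\<forall>x. e < x \<longrightarrow> x \<in> X) \<or> (\<forall>x. e < x \<longrightarrow> x \<notin> X)"
proof -
  obtain z :: 'a where True by simp
  define e where "e = Max (insert z E)"
  have le: "\<forall>e'\<in>E. e' \<le> e" unfolding e_def using fin by simp
  obtain y where ey: "e < y" using nomax by blast
  have key: "x \<in> X \<longleftrightarrow> y \<in> X" if "e < x" for x
  proof -
    have lt: "\<forall>e'\<in>E. e' < min x y"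
    proof
      fix e' assume "e' \<in> E"
      then have "e' \<le> e" using le by blast
      then show "e' < min x y" using that ey by (simp add: le_less_trans)
    qed
    show ?thesis
    proof (rule bp_sym[OF bpX])
      show "x \<notin> E" by (rule above_not_in[OF lt]) simp
      show "y \<notin> E" by (rule above_not_in[OF lt]) simp
      show "\<forall>e'\<in>E. \<not>(x<e' \<and> e'<y) \<and> \<not>(y<e' \<and> e'<x)"
        by (rule above_between[OF lt]) simp_all
    qed
  qed
  show ?thesis
  proof (cases "y \<in> X")
    case True
    then show ?thesis using key by blast
  next
    case False
    then show ?thesis using key by blast
  qed
qed

lemma om_dense:
  fixes S :: "nat \<Rightarrow> ('a::linordered_ab_group_add) list set set" and a b :: 'a
  assumes om: "o_minimal_expansion S" and d: "(0::'a) < d" and ab: "a < b"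
  shows "\<exists>c. a < c \<and> c < b"
proof (rule ccontr)
  assume nc: "\<not> (\<exists>c. a < c \<and> c < b)"
  define \<delta> where "\<delta> = b - a"
  have dp: "0 < \<delta>" using ab by (simp add: \<delta>_def)
  have mn: "\<delta> \<le> w" if "0 < w" for w
  proof (rule ccontr)
    assume "\<not> \<delta> \<le> w"
    then have "w < \<delta>" by simp
    then have "a < a + w" "a + w < b" using that by (simp_all add: \<delta>_def algebra_simps)
    then show False using nc by blast
  qed
  define p :: "'a fm" where "p = FEx (FAdd 1 1 0)"
  have "fwf S 1 p" unfolding p_def using om by simp
  from om_bp_fm[OF om this] obtain E where fin: "finite E" and bpE: "bp E {x. sat p [x]}" by blast
  have satp: "sat p [x] \<longleftrightarrow> (\<exists>y. y + y = x)" for x unfolding p_def by simp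
  define m where "m = Max (insert 0 E) + \<delta>"
  have mE: "\<forall>e\<in>E. e < m"
  proof
    fix e assume "e \<in> E"
    then have "e \<le> Max (insert 0 E)" using fin by simp
    then show "e < m" unfolding m_def using dp
      by (metis add.right_neutral add_le_less_mono)
  qed
  have m0: "0 < m"
  proof -
    have "0 \<le> Max (insert 0 E)" using fin by simp
    then show ?thesis unfolding m_def using dp by (metis add.right_neutral add_le_less_mono)
  qed
  define x where "x = m + m"
  have xm: "m < x" unfolding x_def using m0 by (metis add.right_neutral add_strict_left_mono)
  have xd: "x < x + \<delta>" using dp by (metis add.right_neutral add_strict_left_mono)
  have xmd: "m < x + \<delta>" using xm xd by (rule less_trans)
  have "x \<in> {x. sat p [x]} \<longleftrightarrow> x + \<delta> \<in> {x. sat p [x]}"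
  proof (rule bp_sym[OF bpE])
    show "x \<notin> E" by (rule above_not_in[OF mE]) (use xm in simp)
    show "x + \<delta> \<notin> E" by (rule above_not_in[OF mE]) (use xmd in simp)
    show "\<forall>e\<in>E. \<not> (x < e \<and> e < x + \<delta>) \<and> \<not> (x + \<delta> < e \<and> e < x)"
      by (rule above_between[OF mE]) (use xm xmd in simp_all)
  qed
  moreover have "x \<in> {x. sat p [x]}" using satp x_def by auto
  ultimately obtain z where z: "z + z = x + \<delta>" using satp by auto
  define w where "w = z - m"
  have ww: "w + w = \<delta>" using z unfolding w_def x_def by (simp add: algebra_simps)
  have w0: "0 < w"
  proof (rule ccontr)
    assume "\<not> 0 < w"
    then have "w \<le> 0" by simp
    then have "w + w \<le> 0" by (simp add: add_nonpos_nonpos)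
    then show False using ww dp by simp
  qed
  have "\<delta> + w \<le> w + w" using mn[OF w0] by simp
  moreover have "\<delta> < \<delta> + w" using w0 by (metis add.right_neutral add_strict_left_mono)
  ultimately show False using ww by simp
qed

lemma bp_lub:
  fixes X E :: "'a::linorder set"
  assumes dense: "\<forall>a b::'a. a < b \<longrightarrow> (\<exists>c. a < c \<and> c < b)" and nomax: "\<forall>x::'a. \<exists>y. x < y"
    and fin: "finite E" and bpX: "bp E X" and x0: "x0 \<in> X" and ub: "\<forall>x\<in>X. x \<le> B"
  shows "\<exists>s. (\<forall>x\<in>X. x \<le> s) \<and> (\<forall>s'. s' < s \<longrightarrow> (\<exists>x\<in>X. s' < x))"
proof -
  define K where "K = {q \<in> insert x0 E. \<exists>x\<in>X. q \<le> x}"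
  have fK: "finite K" unfolding K_def using fin by simp
  have x0K: "x0 \<in> K" unfolding K_def using x0 by auto
  define q where "q = Max K"
  have qK: "q \<in> K" unfolding q_def using fK x0K by (intro Max_in) auto
  have Kq: "\<forall>k\<in>K. k \<le> q" unfolding q_def using fK by simp
  show ?thesis
  proof (cases "\<exists>x1\<in>X. q < x1")
    case False
    then have all: "\<forall>x\<in>X. x \<le> q" by (simp add: not_less)
    obtain xq where "xq \<in> X" "q \<le> xq" using qK unfolding K_def by blast
    then have "q \<in> X" using all by (metis order_antisym)
    then show ?thesis using all by blast
  next
    case True
    then obtain x1 where x1: "x1 \<in> X" "q < x1" by blast
    have x1E: "x1 \<notin> E"
    proof
      assume "x1 \<in> E"
      then have "x1 \<in> K" unfolding K_def using x1 by auto
      then show False using Kq x1 by (meson not_le)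
    qed
    define U where "U = {e \<in> E. q < e}"
    have fU: "finite U" unfolding U_def using fin by simp
    show ?thesis
    proof (cases "U = {}")
      case True
      obtain y where y: "max B x1 < y" using nomax by blast
      have yx1: "x1 < y" "B < y" using y by simp_all
      have "x1 \<in> X \<longleftrightarrow> y \<in> X"
      proof (rule bp_sym[OF bpX x1E])
        show "y \<notin> E" using True yx1 x1 unfolding U_def by (auto dest: order.strict_trans)
        show "\<forall>e\<in>E. \<not> (x1 < e \<and> e < y) \<and> \<not> (y < e \<and> e < x1)"
          using True yx1 x1 unfolding U_def by (auto dest: order.strict_trans)
      qed
      then have "y \<in> X" using x1 by simp
      then show ?thesis using ub yx1 by (meson not_le)
    next
      case False
      define e1 where "e1 = Min U"
      have e1U: "e1 \<in> U" unfolding e1_def using fU False by simp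
      have e1min: "\<forall>u\<in>U. e1 \<le> u" unfolding e1_def using fU by simp
      have qe1: "q < e1" "e1 \<in> E" using e1U unfolding U_def by auto
      have below: "\<forall>x\<in>X. x < e1"
      proof
        fix x assume xX: "x \<in> X"
        show "x < e1"
        proof (cases "x \<le> q")
          case True
          then show ?thesis using qe1 by (meson le_less_trans)
        next
          case False
          show ?thesis
          proof (rule ccontr)
            assume "\<not> x < e1"
            then have "e1 \<le> x" by simp
            then have "e1 \<in> K" unfolding K_def using qe1 xX by auto
            then show False using Kq qe1 by (meson not_le)
          qed
        qed
      qed
      have least: "\<forall>s'. s' < e1 \<longrightarrow> (\<exists>x\<in>X. s' < x)"
      proof (intro allI impI)
        fix s' assume s': "s' < e1"
        have "max s' q < e1" using s' qe1 by simp
        then obtain c where c: "max s' q < c" "c < e1" using dense by blast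
        have x1e1: "x1 < e1" using below x1 by blast
        have cE: "c \<notin> E"
        proof
          assume "c \<in> E"
          then have "c \<in> U" unfolding U_def using c by simp
          then show False using e1min c by (meson not_le)
        qed
        have "x1 \<in> X \<longleftrightarrow> c \<in> X"
        proof (rule bp_sym[OF bpX x1E cE])
          show "\<forall>e\<in>E. \<not> (x1 < e \<and> e < c) \<and> \<not> (c < e \<and> e < x1)"
          proof
            fix e assume eE: "e \<in> E"
            show "\<not> (x1 < e \<and> e < c) \<and> \<not> (c < e \<and> e < x1)"
            proof (intro conjI notI)
              assume "x1 < e \<and> e < c"
              then have "e \<in> U" "e < e1" unfolding U_def using eE x1 c by auto
              then show False using e1min by (meson not_le)
            next
              assume "c < e \<and> e < x1"
              then have "e \<in> U" "e < e1" unfolding U_def using eE x1e1 c by auto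
              then show False using e1min by (meson not_le)
            qed
          qed
        qed
        then have "c \<in> X" using x1 by simp
        moreover have "s' < c" using c by simp
        ultimately show "\<exists>x\<in>X. s' < x" by blast
      qed
      show ?thesis using below least by (meson less_imp_le)
    qed
  qed
qed

lemma mem_neg: "(x \<in> uminus ` A) = (- x \<in> (A::'a::ab_group_add set))"
  by (metis image_iff minus_minus)

lemma bp_neg:
  fixes E X :: "'a::linordered_ab_group_add set"
  assumes bpX: "bp E X" shows "bp (uminus ` E) (uminus ` X)"
  unfolding bp_def
proof (intro allI impI)
  fix x y :: 'a
  assume a: "x \<notin> uminus ` E" "y \<notin> uminus ` E" "x < y" "\<forall>e\<in>uminus ` E. \<not> (x < e \<and> e < y)"
  have "-y \<notin> E" "-x \<notin> E" using a(1,2) by (simp_all add: mem_neg)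
  moreover have "-y < -x" using a(3) by simp
  moreover have "\<forall>e\<in>E. \<not> (-y < e \<and> e < -x)"
  proof
    fix e assume "e \<in> E"
    then have "-e \<in> uminus ` E" by simp
    then have "\<not> (x < -e \<and> -e < y)" using a(4) by blast
    then show "\<not> (-y < e \<and> e < -x)" by (auto simp: minus_less_iff less_minus_iff)
  qed
  ultimately have "-y \<in> X \<longleftrightarrow> -x \<in> X" using bpX unfolding bp_def by blast
  then show "x \<in> uminus ` X \<longleftrightarrow> y \<in> uminus ` X" by (simp add: mem_neg)
qed

lemma bp_glb:
  fixes X E :: "'a::linordered_ab_group_add set"
  assumes dense: "\<forall>a b::'a. a < b \<longrightarrow> (\<exists>c. a < c \<and> c < b)" and nomax: "\<forall>x::'a. \<exists>y. x < y"
    and fin: "finite E" and bpX: "bp E X" and x0: "x0 \<in> X" and lb: "\<forall>x\<in>X. b \<le> x"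
  shows "\<exists>a. (\<forall>x\<in>X. a \<le> x) \<and> (\<forall>a'. a < a' \<longrightarrow> (\<exists>x\<in>X. x < a'))"
proof -
  have "-x0 \<in> uminus ` X" using x0 by simp
  moreover have "\<forall>x\<in>uminus ` X. x \<le> -b" using lb by auto
  ultimately obtain s where s1: "\<forall>x\<in>uminus ` X. x \<le> s" and s2: "\<forall>s'. s' < s \<longrightarrow> (\<exists>x\<in>uminus ` X. s' < x)"
    using bp_lub[OF dense nomax finite_imageI[OF fin] bp_neg[OF bpX]] by blast
  have "\<forall>x\<in>X. -s \<le> x" using s1 by (auto simp: minus_le_iff)
  moreover have "\<forall>a'. -s < a' \<longrightarrow> (\<exists>x\<in>X. x < a')"
  proof (intro allI impI)
    fix a' assume "-s < a'"
    then have "-a' < s" by (simp add: minus_less_iff)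
    then obtain y where "y \<in> uminus ` X" "-a' < y" using s2 by blast
    then show "\<exists>x\<in>X. x < a'" by (auto simp: minus_less_iff)
  qed
  ultimately show ?thesis by blast
qed

lemma bp_glb_open:
  fixes X E :: "'a::linorder set"
  assumes fin: "finite E" and bpX: "bp E X" and aX: "a \<notin> X" and s0: "s0 \<in> X"
    and lb: "\<forall>x\<in>X. a \<le> x" and gl: "\<forall>a'. a < a' \<longrightarrow> (\<exists>x\<in>X. x < a')"
  shows "\<exists>c. a < c \<and> (\<forall>x. a < x \<and> x < c \<longrightarrow> x \<in> X)"
proof -
  have gt: "a < x" if "x \<in> X" for x using lb aX that by (metis order.not_eq_order_implies_strict)
  define C where "C = insert s0 {e \<in> E. a < e}"
  have fC: "finite C" unfolding C_def using fin by simp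
  define c where "c = Min C"
  have cC: "\<forall>y\<in>C. c \<le> y" unfolding c_def using fC by simp
  have ac: "a < c" unfolding c_def using fC gt[OF s0] by (simp add: C_def)
  obtain s' where s': "s' \<in> X" "s' < c" using gl ac by blast
  have as': "a < s'" using gt s' by simp
  have notE: "y \<notin> E" if "a < y" "y < c" for y
  proof
    assume "y \<in> E"
    then have "y \<in> C" unfolding C_def using that by simp
    then show False using cC that by (meson not_le)
  qed
  have "\<forall>x. a < x \<and> x < c \<longrightarrow> x \<in> X"
  proof (intro allI impI)
    fix x assume x: "a < x \<and> x < c"
    have "s' \<in> X \<longleftrightarrow> x \<in> X"
    proof (rule bp_sym[OF bpX])
      show "s' \<notin> E" using notE as' s' by simp
      show "x \<notin> E" using notE x by simp
      show "\<forall>e\<in>E. \<not> (s' < e \<and> e < x) \<and> \<not> (x < e \<and> e < s')"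
      proof
        fix e assume "e \<in> E"
        show "\<not> (s' < e \<and> e < x) \<and> \<not> (x < e \<and> e < s')"
        proof (intro conjI notI)
          assume "s' < e \<and> e < x"
          then have "a < e" "e < c" using as' x by (auto dest: less_trans)
          then show False using notE \<open>e \<in> E\<close> by blast
        next
          assume "x < e \<and> e < s'"
          then have "a < e" "e < c" using s' x by (auto dest: less_trans)
          then show False using notE \<open>e \<in> E\<close> by blast
        qed
      qed
    qed
    then show "x \<in> X" using s' by simp
  qed
  then show ?thesis using ac by blast
qed



definition goodG :: "(nat \<Rightarrow> 'a list set set) \<Rightarrow> ('a::linordered_ab_group_add) \<Rightarrow> 'a list set \<Rightarrow> bool" where
  "goodG S e \<Gamma> \<longleftrightarrow> \<Gamma> \<in> S 2 \<and> (\<forall>t. e < t \<longrightarrow> (\<exists>s. [t,s] \<in> \<Gamma>)) \<and> (\<forall>t s. [t,s] \<in> \<Gamma> \<longrightarrow> e < t)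
     \<and> (\<forall>t s s'. [t,s] \<in> \<Gamma> \<longrightarrow> [t,s'] \<in> \<Gamma> \<longrightarrow> s = s')
     \<and> (\<forall>t t' s. [t,s] \<in> \<Gamma> \<longrightarrow> [t',s] \<in> \<Gamma> \<longrightarrow> t = t')
     \<and> (\<exists>b b'. \<forall>t s. [t,s] \<in> \<Gamma> \<longrightarrow> b \<le> s \<and> s \<le> b')"

definition isglb :: "'a list set \<Rightarrow> ('a::linorder) \<Rightarrow> 'a \<Rightarrow> bool" where
  "isglb R t a \<longleftrightarrow> (\<forall>s. [t,s] \<in> R \<longrightarrow> a \<le> s) \<and> (\<forall>a'. a < a' \<longrightarrow> (\<exists>s. [t,s] \<in> R \<and> s < a'))"

definition pI :: "'a list set \<Rightarrow> ('a::linordered_ab_group_add) fm" where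
  "pI R = FConj (FAll (FImp (FAtom R [0,2]) (FNeg (FLt 2 1))))
                (FAll (FImp (FLt 1 2) (FEx (FConj (FAtom R [0,3]) (FLt 3 2)))))"

lemma sat_pI: "sat (pI R) [t,a] = isglb R t a"
  unfolding pI_def isglb_def by (simp add: not_less)

lemma fwf_pI: "o_minimal_expansion S \<Longrightarrow> R \<in> S 2 \<Longrightarrow> fwf S 2 (pI R)"
  unfolding pI_def by (simp add: numeral_2_eq_2)
lemma fwf_pI': "o_minimal_expansion S \<Longrightarrow> R \<in> S 2 \<Longrightarrow> fwf S (Suc (Suc 0)) (pI R)"
  unfolding pI_def by (simp add: numeral_2_eq_2)

lemma isglb_unique: "isglb R t a \<Longrightarrow> isglb R t a' \<Longrightarrow> a = a'"
  unfolding isglb_def by (meson not_less_iff_gr_or_eq not_le)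

lemma nomax_of: "(0::'a::linordered_ab_group_add) < d \<Longrightarrow> \<forall>x::'a. \<exists>y. x < y"
proof
  fix x :: 'a assume "0 < d"
  then have "x < x + d" by (metis add.right_neutral add_strict_left_mono)
  then show "\<exists>y. x < y" by blast
qed

lemma slice_fm:
  fixes S :: "nat \<Rightarrow> ('a::linordered_ab_group_add) list set set"
  assumes om: "o_minimal_expansion S" and R: "R \<in> S 2"
  shows "\<exists>E. finite E \<and> bp E {s. [t,s] \<in> R}"
proof -
  define p :: "'a fm" where "p = FEx (FConj (FC t 1) (FAtom R [1,0]))"
  have "fwf S 1 p" unfolding p_def using om R by (simp add: numeral_2_eq_2)
  from om_bp_fm[OF om this] obtain E where "finite E" "bp E {x. sat p [x]}" by blast
  moreover have "{x. sat p [x]} = {s. [t,s] \<in> R}" unfolding p_def by simp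
  ultimately show ?thesis by auto
qed

lemma claim1:
  fixes S :: "nat \<Rightarrow> ('a::linordered_ab_group_add) list set set"
  assumes om: "o_minimal_expansion S" and d: "(0::'a) < d" and R: "R \<in> S 2"
    and fib: "\<forall>t. e < t \<longrightarrow> (\<exists>s. [t,s] \<in> R)"
    and dis: "\<forall>t t' s. [t,s] \<in> R \<longrightarrow> [t',s] \<in> R \<longrightarrow> t = t'"
    and bd: "\<forall>t s. [t,s] \<in> R \<longrightarrow> b \<le> s \<and> s \<le> b'"
  shows "\<exists>e \<Gamma>. goodG S e \<Gamma>"
proof -
  have dense: "\<forall>a b::'a. a < b \<longrightarrow> (\<exists>c. a < c \<and> c < b)" using om_dense[OF om d] by blast
  have nomax: "\<forall>x::'a. \<exists>y. x < y" by (rule nomax_of[OF d])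
  have exglb: "\<exists>a. isglb R t a" if et: "e < t" for t
  proof -
    obtain s0 where s0: "[t,s0] \<in> R" using fib et by blast
    obtain E where "finite E" "bp E {s. [t,s] \<in> R}" using slice_fm[OF om R] by blast
    from bp_glb[OF dense nomax this, of s0 b] s0 bd
    show ?thesis unfolding isglb_def by auto
  qed
  define D1p where "D1p = FEx (FConj (pI R) (FAtom R [0,1]))"
  have "fwf S 1 D1p" unfolding D1p_def using fwf_pI[OF om R] R by (simp add: numeral_2_eq_2)
  from om_bp_fm[OF om this] obtain E1 where "finite E1" "bp E1 {x. sat D1p [x]}" by blast
  from bp_tail[OF this nomax] obtain e1 where e1: "(\<forall>x. e1 < x \<longrightarrow> sat D1p [x]) \<or> (\<forall>x. e1 < x \<longrightarrow> \<not> sat D1p [x])"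
    by auto
  have satD1: "sat D1p [t] \<longleftrightarrow> (\<exists>a. isglb R t a \<and> [t,a] \<in> R)" for t
    unfolding D1p_def using sat_pI[of R t] by simp
  define e2 where "e2 = max e e1"
  define Gp where "Gp = FConj (pI R) (FEx (FConj (FC e2 2) (FLt 2 0)))"
  define \<Gamma> where "\<Gamma> = {xs. length xs = 2 \<and> sat Gp xs}"
  have memG: "[t,a] \<in> \<Gamma> \<longleftrightarrow> isglb R t a \<and> e2 < t" for t a
    unfolding \<Gamma>_def Gp_def using sat_pI[of R t a] by simp
  have G2: "\<Gamma> \<in> S 2" unfolding \<Gamma>_def
    by (rule om_sound[OF om]) (simp add: Gp_def fwf_pI'[OF om R] om numeral_2_eq_2)
  have g1: "\<forall>t. e2 < t \<longrightarrow> (\<exists>s. [t,s] \<in> \<Gamma>)" using exglb memG unfolding e2_def by auto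
  have g2: "\<forall>t s. [t,s] \<in> \<Gamma> \<longrightarrow> e2 < t" using memG by auto
  have g3: "\<forall>t s s'. [t,s] \<in> \<Gamma> \<longrightarrow> [t,s'] \<in> \<Gamma> \<longrightarrow> s = s'" using memG isglb_unique by blast
  have g4: "\<forall>t t' a. [t,a] \<in> \<Gamma> \<longrightarrow> [t',a] \<in> \<Gamma> \<longrightarrow> t = t'"
  proof (intro allI impI)
    fix t t' a assume "[t,a] \<in> \<Gamma>" "[t',a] \<in> \<Gamma>"
    then have gt: "isglb R t a" "isglb R t' a" "e1 < t" "e1 < t'" "e < t'"
      using memG unfolding e2_def by auto
    show "t = t'"
    proof (cases "\<forall>x. e1 < x \<longrightarrow> sat D1p [x]")
      case True
      then have "[t,a] \<in> R" "[t',a] \<in> R" using satD1 gt isglb_unique by metis+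
      then show ?thesis using dis by blast
    next
      case False
      then have nD: "\<forall>x. e1 < x \<longrightarrow> \<not> sat D1p [x]" using e1 by blast
      have na: "[t,a] \<notin> R" "[t',a] \<notin> R" using nD gt satD1 by blast+
      obtain s0 where s0: "[t',s0] \<in> R" using fib gt by blast
      obtain E where E: "finite E" "bp E {s. [t',s] \<in> R}" using slice_fm[OF om R] by blast
      have "\<exists>c. a < c \<and> (\<forall>x. a < x \<and> x < c \<longrightarrow> x \<in> {s. [t',s] \<in> R})"
        by (rule bp_glb_open[OF E]) (use na s0 gt in \<open>auto simp: isglb_def\<close>)
      then obtain c where c: "a < c" "\<forall>x. a < x \<and> x < c \<longrightarrow> [t',x] \<in> R" by auto
      obtain s where s: "[t,s] \<in> R" "s < c" using gt(1) c(1) unfolding isglb_def by blast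
      have "a \<le> s" using gt(1) s unfolding isglb_def by blast
      moreover have "a \<noteq> s" using na s by blast
      ultimately have "a < s" by simp
      then have "[t',s] \<in> R" using c s by blast
      then show ?thesis using dis s by blast
    qed
  qed
  have g5: "\<forall>t s. [t,s] \<in> \<Gamma> \<longrightarrow> b \<le> s \<and> s \<le> b'"
  proof (intro allI impI)
    fix t a assume "[t,a] \<in> \<Gamma>"
    then have gt: "isglb R t a" "e < t" using memG unfolding e2_def by auto
    obtain s0 where s0: "[t,s0] \<in> R" using fib gt by blast
    have "a \<le> s0" using gt s0 unfolding isglb_def by blast
    then have "a \<le> b'" using bd s0 by (meson order_trans)
    moreover have "b \<le> a"
    proof (rule ccontr)
      assume "\<not> b \<le> a"
      then have "a < b" by simp
      then obtain s where "[t,s] \<in> R" "s < b" using gt unfolding isglb_def by blast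
      then show False using bd by (meson not_le)
    qed
    ultimately show "b \<le> a \<and> a \<le> b'" by simp
  qed
  have "goodG S e2 \<Gamma>" unfolding goodG_def using G2 g1 g2 g3 g4 g5 by blast
  then show ?thesis by blast
qed

lemma map_nth_Rts: "length ys = n \<Longrightarrow> map (nth ([t,s] @ ys)) (0 # map (\<lambda>i. i + 2) [0..<n] @ [1]) = t # ys @ [s]"
proof -
  assume l: "length ys = n"
  have "map (nth ([t,s] @ ys)) (map (\<lambda>i. i + 2) [0..<n]) = map (nth ys) [0..<n]"
    by (simp add: numeral_2_eq_2)
  also have "\<dots> = ys" using l map_nth[of ys] by simp
  finally show ?thesis by simp
qed

lemma map_nth_snoc: "length xs = k \<Longrightarrow> map (nth (xs @ [x])) [0..<Suc k] = xs @ [x]"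
  by (metis length_append_singleton map_nth)

definition islub :: "'a list set \<Rightarrow> ('a::linorder) \<Rightarrow> 'a \<Rightarrow> bool" where
  "islub R s u \<longleftrightarrow> (\<forall>t. [t,s] \<in> R \<longrightarrow> t \<le> u) \<and> (\<forall>u'. u' < u \<longrightarrow> (\<exists>t. [t,s] \<in> R \<and> u' < t))"

lemma islub_unique: "islub R s u \<Longrightarrow> islub R s u' \<Longrightarrow> u = u'"
  unfolding islub_def by (meson not_less_iff_gr_or_eq not_le)

definition pS :: "'a list set \<Rightarrow> ('a::linordered_ab_group_add) fm" where
  "pS R = FConj (FEx (FAtom R [2,1])) (FConj (FAll (FImp (FAtom R [2,1]) (FNeg (FLt 0 2))))
            (FAll (FImp (FLt 2 0) (FEx (FConj (FAtom R [3,1]) (FLt 2 3))))))"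

lemma sat_pS: "sat (pS R) [u,s] = ((\<exists>t. [t,s] \<in> R) \<and> islub R s u)"
  unfolding pS_def islub_def by (simp add: not_less)

lemma fwf_pS: "o_minimal_expansion S \<Longrightarrow> R \<in> S 2 \<Longrightarrow> fwf S (Suc (Suc 0)) (pS R)"
  unfolding pS_def by (simp add: numeral_2_eq_2)

lemma slice_fm2:
  fixes S :: "nat \<Rightarrow> ('a::linordered_ab_group_add) list set set"
  assumes om: "o_minimal_expansion S" and R: "R \<in> S 2"
  shows "\<exists>E. finite E \<and> bp E {t. [t,s] \<in> R}"
proof -
  define p :: "'a fm" where "p = FEx (FConj (FC s 1) (FAtom R [0,1]))"
  have "fwf S 1 p" unfolding p_def using om R by (simp add: numeral_2_eq_2)
  from om_bp_fm[OF om this] obtain E where "finite E" "bp E {x. sat p [x]}" by blast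
  moreover have "{x. sat p [x]} = {t. [t,s] \<in> R}" unfolding p_def by simp
  ultimately show ?thesis by auto
qed

lemma claimN:
  fixes S :: "nat \<Rightarrow> ('a::linordered_ab_group_add) list set set"
  assumes om: "o_minimal_expansion S" and d: "(0::'a) < d"
  shows "R \<in> S (Suc n) \<Longrightarrow> (\<forall>t. e < t \<longrightarrow> (\<exists>y. t # y \<in> R))
    \<Longrightarrow> (\<forall>t t' y. t # y \<in> R \<longrightarrow> t' # y \<in> R \<longrightarrow> t = t')
    \<Longrightarrow> (\<forall>t y. t # y \<in> R \<longrightarrow> (\<forall>u\<in>set y. b \<le> u \<and> u \<le> b'))
    \<Longrightarrow> \<exists>e \<Gamma>. goodG S e \<Gamma>"
proof (induction n arbitrary: R e)
  case 0
  have sub: "\<forall>xs\<in>R. length xs = 1" using so_sub[OF om_so[OF om] 0(1)] by (auto simp: cube_def)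
  define t1 where "t1 = e + d"
  define t2 where "t2 = t1 + d"
  have t1: "e < t1" unfolding t1_def using d by (metis add.right_neutral add_strict_left_mono)
  have t2: "t1 < t2" unfolding t2_def using d by (metis add.right_neutral add_strict_left_mono)
  obtain y1 y2 where y: "t1 # y1 \<in> R" "t2 # y2 \<in> R" using 0(2) t1 t2 by (meson less_trans)
  then have "y1 = []" "y2 = []" using sub by auto
  then have "t1 = t2" using y 0(3) by blast
  then show ?case using t2 by simp
next
  case (Suc n)
  have so: "structure_on S" by (rule om_so[OF om])
  have sub: "\<forall>xs\<in>R. length xs = Suc (Suc n)" using so_sub[OF so Suc(2)] by (auto simp: cube_def)
  define Rtsp :: "'a fm" where "Rtsp = FExs n (FAtom R (0 # map (\<lambda>i. i + 2) [0..<n] @ [1]))"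
  define Rts where "Rts = {xs. length xs = 2 \<and> sat Rtsp xs}"
  have Rts2: "Rts \<in> S 2" unfolding Rts_def
    by (rule om_sound[OF om]) (simp add: Rtsp_def Suc(2))
  have memRts: "[t,s] \<in> Rts \<longleftrightarrow> (\<exists>y'. t # y' @ [s] \<in> R)" for t s
  proof
    assume "[t,s] \<in> Rts"
    then obtain ys where "length ys = n" "map (nth ([t,s] @ ys)) (0 # map (\<lambda>i. i + 2) [0..<n] @ [1]) \<in> R"
      unfolding Rts_def Rtsp_def by auto
    then show "\<exists>y'. t # y' @ [s] \<in> R" using map_nth_Rts by metis
  next
    assume "\<exists>y'. t # y' @ [s] \<in> R"
    then obtain y' where y': "t # y' @ [s] \<in> R" by blast
    then have "length y' = n" using sub by force
    then have "map (nth ([t,s] @ y')) (0 # map (\<lambda>i. i + 2) [0..<n] @ [1]) \<in> R" using map_nth_Rts y' by metis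
    then show "[t,s] \<in> Rts" unfolding Rts_def Rtsp_def using \<open>length y' = n\<close> by auto
  qed
  show ?case
  proof (cases "\<exists>s0 e1. \<forall>t. e1 < t \<longrightarrow> [t,s0] \<in> Rts")
    case True
    then obtain s0 e1 where se: "\<forall>t. e1 < t \<longrightarrow> [t,s0] \<in> Rts" by blast
    define R'p :: "'a fm" where "R'p = FEx (FConj (FC s0 (Suc n)) (FAtom R [0..<Suc (Suc n)]))"
    define R' where "R' = {xs. length xs = Suc n \<and> sat R'p xs}"
    have R'S: "R' \<in> S (Suc n)" unfolding R'_def
      by (rule om_sound[OF om]) (simp add: R'p_def Suc(2) om)
    have memR': "t # y' \<in> R' \<longleftrightarrow> length y' = n \<and> t # y' @ [s0] \<in> R" for t y'
    proof -
      have A: "t # y' \<in> R' \<longleftrightarrow> length y' = n \<and> map (nth ((t # y') @ [s0])) [0..<Suc (Suc n)] \<in> R"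
        unfolding R'_def R'p_def by auto
      have B: "map (nth ((t # y') @ [s0])) [0..<Suc (Suc n)] = (t # y') @ [s0]" if "length y' = n"
      proof -
        have "length (t # y') = Suc n" using that by simp
        then show ?thesis by (rule map_nth_snoc)
      qed
      show ?thesis
      proof
        assume "t # y' \<in> R'"
        then have "length y' = n" "map (nth ((t # y') @ [s0])) [0..<Suc (Suc n)] \<in> R" using A by blast+
        then show "length y' = n \<and> t # y' @ [s0] \<in> R" using B by (metis append_Cons)
      next
        assume C: "length y' = n \<and> t # y' @ [s0] \<in> R"
        then have "map (nth ((t # y') @ [s0])) [0..<Suc (Suc n)] \<in> R" using B by (metis append_Cons)
        then show "t # y' \<in> R'" using A C by blast
      qed
    qed
    show ?thesis
    proof (rule Suc.IH[OF R'S])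
      show "\<forall>t. e1 < t \<longrightarrow> (\<exists>y. t # y \<in> R')"
      proof (intro allI impI)
        fix t assume "e1 < t"
        then obtain y' where y': "t # y' @ [s0] \<in> R" using se memRts by blast
        then have "length y' = n" using sub by force
        then show "\<exists>y. t # y \<in> R'" using y' memR' by blast
      qed
      show "\<forall>t t' y. t # y \<in> R' \<longrightarrow> t' # y \<in> R' \<longrightarrow> t = t'"
      proof (intro allI impI)
        fix t t' y assume "t # y \<in> R'" "t' # y \<in> R'"
        then have "t # (y @ [s0]) \<in> R" "t' # (y @ [s0]) \<in> R" using memR' by auto
        then show "t = t'" using Suc(4) by blast
      qed
      show "\<forall>t y. t # y \<in> R' \<longrightarrow> (\<forall>u\<in>set y. b \<le> u \<and> u \<le> b')"
      proof (intro allI impI)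
        fix t y assume "t # y \<in> R'"
        then have "t # (y @ [s0]) \<in> R" using memR' by auto
        then show "\<forall>u\<in>set y. b \<le> u \<and> u \<le> b'" using Suc(5) by fastforce
      qed
    qed
  next
    case False
    have dense: "\<forall>a b::'a. a < b \<longrightarrow> (\<exists>c. a < c \<and> c < b)" using om_dense[OF om d] by blast
    have nomax: "\<forall>x::'a. \<exists>y. x < y" by (rule nomax_of[OF d])
    have bdd: "\<exists>e'. \<forall>t. [t,s] \<in> Rts \<longrightarrow> t \<le> e'" for s
    proof -
      obtain E where E: "finite E" "bp E {t. [t,s] \<in> Rts}" using slice_fm2[OF om Rts2] by blast
      from bp_tail[OF E nomax] obtain e' where
        "(\<forall>x. e' < x \<longrightarrow> [x,s] \<in> Rts) \<or> (\<forall>x. e' < x \<longrightarrow> [x,s] \<notin> Rts)" by auto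
      then have "\<forall>x. e' < x \<longrightarrow> [x,s] \<notin> Rts" using False by blast
      then show ?thesis by (meson not_le)
    qed
    have exlub: "\<exists>u. islub Rts s u" if ts: "[t,s] \<in> Rts" for t s
    proof -
      obtain e' where e': "\<forall>t. [t,s] \<in> Rts \<longrightarrow> t \<le> e'" using bdd by blast
      obtain E where E: "finite E" "bp E {t. [t,s] \<in> Rts}" using slice_fm2[OF om Rts2] by blast
      from bp_lub[OF dense nomax E, of t e'] ts e'
      show ?thesis unfolding islub_def by auto
    qed
    define \<Sigma> where "\<Sigma> = {xs. length xs = 2 \<and> sat (pS Rts) xs}"
    have \<Sigma>2: "\<Sigma> \<in> S 2" unfolding \<Sigma>_def
      by (rule om_sound[OF om]) (simp add: fwf_pS[OF om Rts2] numeral_2_eq_2)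
    have mem\<Sigma>: "[u,s] \<in> \<Sigma> \<longleftrightarrow> (\<exists>t. [t,s] \<in> Rts) \<and> islub Rts s u" for u s
      unfolding \<Sigma>_def using sat_pS[of Rts u s] by simp
    define Imp :: "'a fm" where "Imp = FEx (FAtom \<Sigma> [0,1])"
    have "fwf S 1 Imp" unfolding Imp_def using \<Sigma>2 by (simp add: numeral_2_eq_2)
    from om_bp_fm[OF om this] obtain EI where EI: "finite EI" "bp EI {x. sat Imp [x]}" by blast
    have satImp: "sat Imp [u] \<longleftrightarrow> (\<exists>s. [u,s] \<in> \<Sigma>)" for u unfolding Imp_def by simp
    from bp_tail[OF EI nomax] obtain e2 where
      e2: "(\<forall>x. e2 < x \<longrightarrow> sat Imp [x]) \<or> (\<forall>x. e2 < x \<longrightarrow> \<not> sat Imp [x])" by auto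
    have unb: "\<exists>x. e2 < x \<and> sat Imp [x]"
    proof -
      define t where "t = max e e2 + d"
      have mt: "max e e2 < t" unfolding t_def using d by (metis add.right_neutral add_strict_left_mono)
      have tt: "e < t" "e2 < t" using mt by simp_all
      obtain y where y: "t # y \<in> R" using Suc(3) tt by blast
      then have "length y = Suc n" using sub by force
      then have "y \<noteq> []" by auto
      then have "y = butlast y @ [last y]" by simp
      then have "t # butlast y @ [last y] \<in> R" using y by metis
      then have ts: "[t, last y] \<in> Rts" using memRts by blast
      obtain u where u: "islub Rts (last y) u" using exlub[OF ts] by blast
      have "t \<le> u" using u ts unfolding islub_def by blast
      then have "e2 < u" using tt by (meson less_le_trans)
      moreover have "[u, last y] \<in> \<Sigma>" using mem\<Sigma> u ts by blast
      ultimately show ?thesis using satImp by blast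
    qed
    have fibS: "\<forall>u. e2 < u \<longrightarrow> (\<exists>s. [u,s] \<in> \<Sigma>)" using e2 unb satImp by blast
    have disS: "\<forall>u u' s. [u,s] \<in> \<Sigma> \<longrightarrow> [u',s] \<in> \<Sigma> \<longrightarrow> u = u'"
      using mem\<Sigma> islub_unique by blast
    have bdS: "\<forall>u s. [u,s] \<in> \<Sigma> \<longrightarrow> b \<le> s \<and> s \<le> b'"
    proof (intro allI impI)
      fix u s assume "[u,s] \<in> \<Sigma>"
      then obtain t where "[t,s] \<in> Rts" using mem\<Sigma> by blast
      then obtain y' where "t # y' @ [s] \<in> R" using memRts by blast
      then show "b \<le> s \<and> s \<le> b'" using Suc(5) by fastforce
    qed
    show ?thesis by (rule claim1[OF om d \<Sigma>2 fibS disS bdS])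
  qed
qed

lemma map_nth_off: "k = length ps \<Longrightarrow> l \<le> length xs \<Longrightarrow> map (nth (ps @ xs)) (map (\<lambda>j. j + k) [0..<l]) = take l xs"
  by (rule nth_equalityI) (auto simp: nth_append)

lemma the_G: "goodG S e \<Gamma> \<Longrightarrow> [t,s] \<in> \<Gamma> \<Longrightarrow> (THE s. [t,s] \<in> \<Gamma>) = s"
  unfolding goodG_def by (rule the_equality) blast+

lemma coord_unbounded:
  fixes M :: "('a::linordered_ab_group_add) list set"
  assumes Mc: "M \<subseteq> cube m" and nb: "\<not> bounded_set M"
  shows "\<exists>i<m. (\<forall>c. \<exists>x\<in>M. c < x ! i) \<or> (\<forall>c. \<exists>x\<in>M. c < - (x ! i))"
proof (rule ccontr)
  assume "\<not> ?thesis"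
  then have H: "\<forall>i<m. (\<exists>c. \<forall>x\<in>M. x ! i \<le> c) \<and> (\<exists>c. \<forall>x\<in>M. - (x ! i) \<le> c)"
    by (simp add: not_less) (meson not_le)
  then have "\<forall>i\<in>{..<m}. \<exists>c. \<forall>x\<in>M. x ! i \<le> c" and "\<forall>i\<in>{..<m}. \<exists>c. \<forall>x\<in>M. - (x ! i) \<le> c"
    by simp_all
  then obtain hi lo where hi: "\<forall>i\<in>{..<m}. \<forall>x\<in>M. x ! i \<le> hi i" and lo: "\<forall>i\<in>{..<m}. \<forall>x\<in>M. - (x ! i) \<le> lo i"
    by metis
  define B where "B = Max (insert 0 (hi ` {..<m}))"
  define L where "L = Max (insert 0 (lo ` {..<m}))"
  have "\<forall>xs\<in>M. \<forall>t\<in>set xs. - L \<le> t \<and> t \<le> B"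
  proof (intro ballI)
    fix xs t assume xs: "xs \<in> M" and t: "t \<in> set xs"
    then have lx: "length xs = m" using Mc by (auto simp: cube_def)
    obtain i where i: "i < length xs" "t = xs ! i" using t by (metis in_set_conv_nth)
    have "t \<le> hi i" using hi xs i lx by auto
    moreover have "hi i \<le> B" unfolding B_def using i lx by simp
    moreover have "- t \<le> lo i" using lo xs i lx by auto
    moreover have "lo i \<le> L" unfolding L_def using i lx by simp
    ultimately have "t \<le> B" "- t \<le> L" by (meson order_trans)+
    then show "- L \<le> t \<and> t \<le> B" by (simp add: minus_le_iff)
  qed
  then have "bounded_set M" unfolding bounded_set_def by blast
  then show False using nb by simp
qed

theorem proposition3p5:
  fixes S :: "nat \<Rightarrow> ('a::linordered_ab_group_add) list set set"
    and M N :: "'a list set" and m n :: nat and h :: "'a list \<Rightarrow> 'a list"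
  assumes "o_minimal_expansion S"
    and "definable S m M" and "\<not> bounded_set M"
    and "definable S n N" and "bounded_set N"
    and "definable_map S m n M h" and "bij_betw h M N"
  shows "\<exists>D f. definable S 1 D \<and> bounded_set D \<and>
           definable_map S 1 1 {[t] | t. 0 < t} f \<and> bij_betw f {[t] | t. 0 < t} D"
proof -
  have om: "o_minimal_expansion S" by fact
  have so: "structure_on S" by (rule om_so[OF om])
  show ?thesis
  proof (cases "\<exists>d::'a. 0 < d")
    case False
    then have P: "{[t] | t::'a. 0 < t} = {}" by auto
    have "definable S 1 {}" unfolding definable_def by (rule so_empty[OF so])
    moreover have "bounded_set ({} :: 'a list set)" unfolding bounded_set_def by simp
    moreover have "definable_map S 1 1 {} id"
      unfolding definable_map_def using so_empty[OF so] by simp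
    moreover have "bij_betw id {} ({} :: 'a list set)" by simp
    ultimately show ?thesis unfolding P by blast
  next
    case True
    then obtain d :: 'a where d: "0 < d" by blast
    obtain b b' where bN: "\<forall>xs\<in>N. \<forall>t\<in>set xs. b \<le> t \<and> t \<le> b'"
      using assms(5) unfolding bounded_set_def by blast
    have Mc: "M \<subseteq> cube m" and hN: "h ` M \<subseteq> cube n" and Gr: "{xs @ h xs | xs. xs \<in> M} \<in> S (m + n)"
      using assms(6) unfolding definable_map_def by auto
    have MS: "M \<in> S m" using assms(2) unfolding definable_def .
    have injh: "inj_on h M" and imh: "h ` M = N" using assms(7) unfolding bij_betw_def by auto
    define Gr where "Gr = {xs @ h xs | xs. xs \<in> M}"
    have GrS: "Gr \<in> S (m + n)" using Gr unfolding Gr_def .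
    have memGr: "x @ y \<in> Gr \<longleftrightarrow> x \<in> M \<and> y = h x" if "length x = m" for x y
    proof
      assume "x @ y \<in> Gr"
      then obtain x' where x': "x' \<in> M" "x @ y = x' @ h x'" unfolding Gr_def by blast
      then have "length x' = m" using Mc by (auto simp: cube_def)
      then show "x \<in> M \<and> y = h x" using x' that by auto
    qed (auto simp: Gr_def)
    obtain i where i: "i < m" and unb: "(\<forall>c. \<exists>x\<in>M. c < x ! i) \<or> (\<forall>c. \<exists>x\<in>M. c < - (x ! i))"
      using coord_unbounded[OF Mc assms(3)] by blast
    obtain g :: "'a \<Rightarrow> 'a" and Ag where gA: "Ag \<in> S 2" "\<forall>u v. [u,v] \<in> Ag \<longleftrightarrow> u = g v"
      and ginj: "inj g" and gunb: "\<forall>c. \<exists>x\<in>M. c < g (x ! i)"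
    proof (cases "\<forall>c. \<exists>x\<in>M. c < x ! i")
      case True
      have "EqS \<in> S 2" by (rule om_eq[OF om])
      moreover have "\<forall>u v. [u,v] \<in> EqS \<longleftrightarrow> u = id v" by simp
      ultimately show ?thesis using that[of EqS id] True by simp
    next
      case False
      then have ub: "\<forall>c. \<exists>x\<in>M. c < - (x ! i)" using unb by blast
      define A :: "'a list set" where "A = {xs. length xs = 2 \<and> sat (FEx (FConj (FC 0 2) (FAdd 0 1 2))) xs}"
      have "A \<in> S 2" unfolding A_def by (rule om_sound[OF om]) (simp add: om numeral_2_eq_2)
      moreover have "\<forall>u v. [u,v] \<in> A \<longleftrightarrow> u = uminus v" unfolding A_def by (auto simp: eq_neg_iff_add_eq_0)
      moreover have "inj (uminus :: 'a \<Rightarrow> 'a)" by (simp add: inj_on_def)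
      ultimately show ?thesis using that[of A uminus] ub by simp
    qed
    define Wp :: "'a fm" where "Wp = FExs m (FConj (FAtom M (map (\<lambda>j. j + 1) [0..<m])) (FAtom Ag [0, i + 1]))"
    have satW: "sat Wp [t] \<longleftrightarrow> (\<exists>x\<in>M. t = g (x ! i))" for t
    proof
      assume "sat Wp [t]"
      then obtain ys where ys: "length ys = m" "map (nth ([t] @ ys)) (map (\<lambda>j. j + 1) [0..<m]) \<in> M"
        "[t, ([t] @ ys) ! (i + 1)] \<in> Ag" unfolding Wp_def by auto
      have "map (nth ([t] @ ys)) (map (\<lambda>j. j + 1) [0..<m]) = ys" using map_nth_off[of 1 "[t]" m ys] ys by simp
      then show "\<exists>x\<in>M. t = g (x ! i)" using ys gA by auto
    next
      assume "\<exists>x\<in>M. t = g (x ! i)"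
      then obtain x where x: "x \<in> M" "t = g (x ! i)" by blast
      have lx: "length x = m" using x Mc by (auto simp: cube_def)
      have "map (nth ([t] @ x)) (map (\<lambda>j. j + 1) [0..<m]) = x" using map_nth_off[of 1 "[t]" m x] lx by simp
      then show "sat Wp [t]" unfolding Wp_def using x lx gA by (auto intro!: exI[of _ x])
    qed
    have "fwf S 1 Wp" unfolding Wp_def using MS gA i by (simp add: numeral_2_eq_2)
    from om_bp_fm[OF om this] obtain EW where EW: "finite EW" "bp EW {x. sat Wp [x]}" by blast
    from bp_tail[OF EW nomax_of[OF d]] obtain e0 where
      e0: "(\<forall>x. e0 < x \<longrightarrow> sat Wp [x]) \<or> (\<forall>x. e0 < x \<longrightarrow> \<not> sat Wp [x])" by auto
    have tailW: "\<forall>t. e0 < t \<longrightarrow> (\<exists>x\<in>M. t = g (x ! i))"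
    proof -
      obtain x where "x \<in> M" "e0 < g (x ! i)" using gunb by blast
      then have "\<not> (\<forall>x. e0 < x \<longrightarrow> \<not> sat Wp [x])" using satW by blast
      then show ?thesis using e0 satW by blast
    qed
    define R0p :: "'a fm" where "R0p = FExs m (FConj (FAtom Gr (map (\<lambda>j. j + Suc n) [0..<m] @ map (\<lambda>j. j + 1) [0..<n]))
                                    (FAtom Ag [0, i + Suc n]))"
    define R0 where "R0 = {xs. length xs = Suc n \<and> sat R0p xs}"
    have R0S: "R0 \<in> S (Suc n)" unfolding R0_def
      by (rule om_sound[OF om]) (use gA(1) i in \<open>auto simp: R0p_def GrS numeral_2_eq_2\<close>)
    have memR0: "t # y \<in> R0 \<longleftrightarrow> length y = n \<and> (\<exists>x\<in>M. y = h x \<and> t = g (x ! i))" for t y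
    proof
      assume "t # y \<in> R0"
      then obtain xs where ly: "length y = n" and xs: "length xs = m"
        "map (nth (t # y @ xs)) (map (\<lambda>j. j + Suc n) [0..<m] @ map (\<lambda>j. j + 1) [0..<n]) \<in> Gr"
        "[t, (t # y @ xs) ! (i + Suc n)] \<in> Ag" unfolding R0_def R0p_def by auto
      have e1: "map (nth ((t # y) @ xs)) (map (\<lambda>j. j + Suc n) [0..<m]) = xs"
        using map_nth_off[of "Suc n" "t # y" m xs] ly xs by simp
      have e2: "map (nth ([t] @ (y @ xs))) (map (\<lambda>j. j + 1) [0..<n]) = y"
        using map_nth_off[of 1 "[t]" n "y @ xs"] ly by simp
      have "xs @ y \<in> Gr" using xs(2) e1 e2 by simp
      then have "xs \<in> M" "y = h xs" using memGr xs(1) by auto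
      moreover have "(t # y @ xs) ! (i + Suc n) = xs ! i" using ly by (simp add: nth_append)
      ultimately show "length y = n \<and> (\<exists>x\<in>M. y = h x \<and> t = g (x ! i))" using xs(3) gA ly by auto
    next
      assume "length y = n \<and> (\<exists>x\<in>M. y = h x \<and> t = g (x ! i))"
      then obtain x where ly: "length y = n" and x: "x \<in> M" "y = h x" "t = g (x ! i)" by blast
      have lx: "length x = m" using x Mc by (auto simp: cube_def)
      have e1: "map (nth ((t # y) @ x)) (map (\<lambda>j. j + Suc n) [0..<m]) = x"
        using map_nth_off[of "Suc n" "t # y" m x] ly lx by simp
      have e2: "map (nth ([t] @ (y @ x))) (map (\<lambda>j. j + 1) [0..<n]) = y"
        using map_nth_off[of 1 "[t]" n "y @ x"] ly by simp
      have "x @ y \<in> Gr" using memGr lx x by simp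
      then have A1: "map (nth (t # y @ x)) (map (\<lambda>j. j + Suc n) [0..<m] @ map (\<lambda>j. j + 1) [0..<n]) \<in> Gr"
        using e1 e2 by simp
      have "(t # y @ x) ! (i + Suc n) = x ! i" using ly by (simp add: nth_append)
      then have A2: "[t, (t # y @ x) ! (i + Suc n)] \<in> Ag" using gA x by simp
      show "t # y \<in> R0" unfolding R0_def R0p_def using A1 A2 ly lx by (auto intro!: exI[of _ x])
    qed
    have "\<exists>e \<Gamma>. goodG S e \<Gamma>"
    proof (rule claimN[OF om d R0S])
      show "\<forall>t. e0 < t \<longrightarrow> (\<exists>y. t # y \<in> R0)"
      proof (intro allI impI)
        fix t assume "e0 < t"
        then obtain x where x: "x \<in> M" "t = g (x ! i)" using tailW by blast
        have "length (h x) = n" using hN x by (auto simp: cube_def)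
        then show "\<exists>y. t # y \<in> R0" using memR0 x by blast
      qed
      show "\<forall>t t' y. t # y \<in> R0 \<longrightarrow> t' # y \<in> R0 \<longrightarrow> t = t'"
      proof (intro allI impI)
        fix t t' y assume "t # y \<in> R0" "t' # y \<in> R0"
        then obtain x x' where "x \<in> M" "y = h x" "t = g (x ! i)" "x' \<in> M" "y = h x'" "t' = g (x' ! i)"
          using memR0 by meson
        then show "t = t'" using injh by (metis inj_onD)
      qed
      show "\<forall>t y. t # y \<in> R0 \<longrightarrow> (\<forall>u\<in>set y. b \<le> u \<and> u \<le> b')"
      proof (intro allI impI)
        fix t y assume "t # y \<in> R0"
        then obtain x where "x \<in> M" "y = h x" using memR0 by blast
        then have "y \<in> N" using imh by blast
        then show "\<forall>u\<in>set y. b \<le> u \<and> u \<le> b'" using bN by blast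
      qed
    qed
    then obtain e \<Gamma> where G: "goodG S e \<Gamma>" by blast
    have G2: "\<Gamma> \<in> S 2" and Gfib: "\<forall>t. e < t \<longrightarrow> (\<exists>s. [t,s] \<in> \<Gamma>)" and Ge: "\<forall>t s. [t,s] \<in> \<Gamma> \<longrightarrow> e < t"
      and Ginj: "\<forall>t t' s. [t,s] \<in> \<Gamma> \<longrightarrow> [t',s] \<in> \<Gamma> \<longrightarrow> t = t'"
      and Gbd: "\<exists>b b'. \<forall>t s. [t,s] \<in> \<Gamma> \<longrightarrow> b \<le> s \<and> s \<le> b'"
      using G unfolding goodG_def by blast+
    define D where "D = {[s] | s. \<exists>t. [t,s] \<in> \<Gamma>}"
    define f where "f = (\<lambda>xs. [THE s. [hd xs + e, s] \<in> \<Gamma>])"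
    define P where "P = {[t] | t::'a. 0 < t}"
    have fval: "f [x] = [s]" if "[x + e, s] \<in> \<Gamma>" for x s
      unfolding f_def using the_G[OF G that] by simp
    have fex: "\<exists>s. [x + e, s] \<in> \<Gamma>" if "0 < x" for x
    proof -
      have "e < x + e" using that by (metis add.commute add_strict_left_mono add.right_neutral)
      then show ?thesis using Gfib by blast
    qed
    have defD: "definable S 1 D"
    proof -
      have "{xs. length xs = 1 \<and> sat (FEx (FAtom \<Gamma> [1,0])) xs} \<in> S 1"
        by (rule om_sound[OF om]) (use G2 in \<open>simp add: numeral_2_eq_2\<close>)
      moreover have "{xs. length xs = 1 \<and> sat (FEx (FAtom \<Gamma> [1,0])) xs} = D"
        unfolding D_def by (auto simp: length_Suc_conv)
      ultimately show ?thesis unfolding definable_def by simp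
    qed
    have bdD: "bounded_set D"
    proof -
      obtain c c' where "\<forall>t s. [t,s] \<in> \<Gamma> \<longrightarrow> c \<le> s \<and> s \<le> c'" using Gbd by blast
      then have "\<forall>xs\<in>D. \<forall>u\<in>set xs. c \<le> u \<and> u \<le> c'" unfolding D_def by auto
      then show ?thesis unfolding bounded_set_def by blast
    qed
    have graph: "{xs @ f xs | xs. xs \<in> P} =
        {xs. length xs = 2 \<and> sat (FConj (FEx (FConj (FC 0 2) (FLt 2 0)))
                                 (FEx (FConj (FEx (FConj (FC e 3) (FAdd 0 3 2))) (FAtom \<Gamma> [2,1])))) xs}"
      (is "?L = ?R")
    proof
      show "?L \<subseteq> ?R"
      proof
        fix z assume "z \<in> ?L"
        then obtain x where x: "0 < x" "z = [x] @ f [x]" unfolding P_def by blast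
        obtain s where s: "[x + e, s] \<in> \<Gamma>" using fex[OF x(1)] by blast
        have "z = [x, s]" using x fval[OF s] by simp
        then show "z \<in> ?R" using x s by auto
      qed
    next
      show "?R \<subseteq> ?L"
      proof
        fix z assume "z \<in> ?R"
        then obtain x s where z: "z = [x, s]" "0 < x" "[x + e, s] \<in> \<Gamma>"
          by (auto simp: length_Suc_conv numeral_2_eq_2)
        have "z = [x] @ f [x]" using z fval by simp
        moreover have "[x] \<in> P" unfolding P_def using z by simp
        ultimately show "z \<in> ?L" by blast
      qed
    qed
    have dm: "definable_map S 1 1 P f"
      unfolding definable_map_def
    proof (intro conjI)
      show "P \<subseteq> cube 1" unfolding P_def cube_def by auto
      show "f ` P \<subseteq> cube 1" unfolding f_def cube_def by auto
      have "{xs. length xs = 2 \<and> sat (FConj (FEx (FConj (FC 0 2) (FLt 2 0)))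
                                 (FEx (FConj (FEx (FConj (FC e 3) (FAdd 0 3 2))) (FAtom \<Gamma> [2,1])))) xs} \<in> S 2"
        by (rule om_sound[OF om]) (use G2 in \<open>simp add: om numeral_2_eq_2 numeral_3_eq_3\<close>)
      then show "{xs @ f xs | xs. xs \<in> P} \<in> S (1 + 1)" using graph by (simp only: one_add_one)
    qed
    have bij: "bij_betw f P D"
      unfolding bij_betw_def
    proof
      show "inj_on f P"
      proof (rule inj_onI)
        fix z z' assume "z \<in> P" "z' \<in> P" "f z = f z'"
        then obtain x x' where xx: "z = [x]" "z' = [x']" "0 < x" "0 < x'" "f [x] = f [x']" unfolding P_def by blast
        obtain s where s: "[x + e, s] \<in> \<Gamma>" using fex[OF xx(3)] by blast
        obtain s' where s': "[x' + e, s'] \<in> \<Gamma>" using fex[OF xx(4)] by blast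
        have "s = s'" using fval[OF s] fval[OF s'] xx(5) by simp
        then have "x + e = x' + e" using Ginj s s' by blast
        then show "z = z'" using xx by simp
      qed
      show "f ` P = D"
      proof
        show "f ` P \<subseteq> D"
        proof
          fix w assume "w \<in> f ` P"
          then obtain x where x: "0 < x" "w = f [x]" unfolding P_def by blast
          obtain s where s: "[x + e, s] \<in> \<Gamma>" using fex[OF x(1)] by blast
          then show "w \<in> D" using x fval[OF s] unfolding D_def by blast
        qed
        show "D \<subseteq> f ` P"
        proof
          fix w assume "w \<in> D"
          then obtain s t where w: "w = [s]" "[t,s] \<in> \<Gamma>" unfolding D_def by blast
          have et: "e < t" using Ge w by blast
          define x where "x = t - e"
          have x0: "0 < x" unfolding x_def using et by simp
          have "x + e = t" unfolding x_def by simp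
          then have "f [x] = w" using fval w by simp
          moreover have "[x] \<in> P" unfolding P_def using x0 by simp
          ultimately show "w \<in> f ` P" by blast
        qed
      qed
    qed
    show ?thesis using defD bdD dm bij unfolding P_def by blast
  qed
qed

end
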